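(* The standard 2-cocycle $\alpha(A,B)=\mathrm{tr}\big(\pi([A,B])-[\pi(A),\pi(B)]\big)$ on $\overline{gl}(\infty)$ is multiplicative: for all $A,B,C\in\overline{gl}(\infty)$, $\alpha(AB,C)+\alpha(BC,A)+\alpha(CA,B)=0$.
   Context: $\overline{gl}(\infty)$ is the associative algebra (and Lie algebra under the commutator) of complex matrices $A=(a_{ij})_{i,j\in\mathbb Z}$ with finitely many nonzero diagonals, i.e. there is $r=r(A)$ with $a_{ij}=0$ whenever $|i-j|>r$, with the usual matrix product. For $A\in\overline{gl}(\infty)$, $\pi(A)$ is the matrix with entries $\pi(A)_{ij}=a_{ij}$ if $i\ge0$ and $j\ge0$, and $0$ otherwise. The matrix $\pi([A,B])-[\pi(A),\pi(B)]$ has finitely many nonzero entries, so its trace is defined. *)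

theory Defs
  imports "HOL-Analysis.Analysis"
begin

type_synonym zmat = "int \<Rightarrow> int \<Rightarrow> complex"

definition gl_bar :: "zmat set" where
  "gl_bar = {A. \<exists>r::nat. \<forall>i j. \<bar>i - j\<bar> > int r \<longrightarrow> A i j = 0}"

text \<open>Usual matrix product; the sum is finite for matrices in gl_bar
  (only finitely many k with A i k * B k j nonzero).\<close>
definition zmult :: "zmat \<Rightarrow> zmat \<Rightarrow> zmat" where
  "zmult A B = (\<lambda>i j. \<Sum>k\<in>{k. A i k * B k j \<noteq> 0}. A i k * B k j)"

definition zcomm :: "zmat \<Rightarrow> zmat \<Rightarrow> zmat" where
  "zcomm A B = (\<lambda>i j. zmult A B i j - zmult B A i j)"

definition zproj :: "zmat \<Rightarrow> zmat" where
  "zproj A = (\<lambda>i j. if i \<ge> 0 \<and> j \<ge> 0 then A i j else 0)"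

definition ztrace :: "zmat \<Rightarrow> complex" where
  "ztrace M = (\<Sum>i\<in>{i. M i i \<noteq> 0}. M i i)"

definition alpha :: "zmat \<Rightarrow> zmat \<Rightarrow> complex" where
  "alpha A B = ztrace (\<lambda>i j. zproj (zcomm A B) i j - zcomm (zproj A) (zproj B) i j)"

end

theory Submission
  imports Defs
begin

definition band :: "nat \<Rightarrow> zmat \<Rightarrow> bool" where
  "band r X \<longleftrightarrow> (\<forall>i j. \<bar>i - j\<bar> > int r \<longrightarrow> X i j = 0)"

definition sg :: "int \<Rightarrow> complex" where
  "sg i = (if i \<ge> 0 then 1 else 0)"

lemma sum_support:
  assumes "finite T" "\<And>k. k \<notin> T \<Longrightarrow> f k = 0"
  shows "(\<Sum>k\<in>{k. f k \<noteq> 0}. f k) = sum f T"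
proof (rule sum.mono_neutral_left)
  show "finite T" by fact
  show "{k. f k \<noteq> 0} \<subseteq> T" using assms(2) by blast
  show "\<forall>i\<in>T - {k. f k \<noteq> 0}. f i = 0" by auto
qed

lemma sum_common:
  assumes "finite S" "finite T" "\<And>k. k \<notin> S \<inter> T \<Longrightarrow> f k = 0"
  shows "sum f S = sum f T"
proof -
  have "sum f S = sum f (S \<inter> T)"
    by (rule sum.mono_neutral_right) (use assms in auto)
  also have "\<dots> = sum f T"
    by (rule sum.mono_neutral_left) (use assms in auto)
  finally show ?thesis .
qed

lemma zmult_band1:
  assumes "band r X"
  shows "zmult X Y i j = (\<Sum>k\<in>{i - int r..i + int r}. X i k * Y k j)"
  unfolding zmult_def
  by (rule sum_support) (use assms in \<open>auto simp: band_def\<close>)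

lemma zmult_band2:
  assumes "band r X"
  shows "zmult Y X i j = (\<Sum>k\<in>{j - int r..j + int r}. Y i k * X k j)"
  unfolding zmult_def
  by (rule sum_support) (use assms in \<open>auto simp: band_def\<close>)

lemma band_mult:
  assumes "band ra A" "band rb B"
  shows "band (ra + rb) (zmult A B)"
  unfolding band_def
proof (intro allI impI)
  fix i j assume h: "int (ra + rb) < \<bar>i - j\<bar>"
  have "zmult A B i j = (\<Sum>k\<in>{i - int ra..i + int ra}. A i k * B k j)"
    by (rule zmult_band1[OF assms(1)])
  also have "\<dots> = 0"
  proof (rule sum.neutral, rule ballI)
    fix k assume "k \<in> {i - int ra..i + int ra}"
    then have "\<bar>k - j\<bar> > int rb" using h by auto
    then show "A i k * B k j = 0" using assms(2) by (auto simp: band_def)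
  qed
  finally show "zmult A B i j = 0" .
qed

lemma band_proj: "band r X \<Longrightarrow> band r (zproj X)"
  by (auto simp: band_def zproj_def)

lemma band_of_gl: "A \<in> gl_bar \<Longrightarrow> \<exists>r. band r A"
  by (auto simp: gl_bar_def band_def)

lemma diag:
  assumes "band r X"
  shows "(\<lambda>i j. zproj (zcomm X Y) i j - zcomm (zproj X) (zproj Y) i j) i i =
    (if i \<ge> 0 then (\<Sum>k\<in>{i - int r..i + int r}.
        (if k < 0 then X i k * Y k i - Y i k * X k i else 0)) else 0)"
proof (cases "i \<ge> 0")
  case True
  have pX: "band r (zproj X)" using band_proj[OF assms] .
  show ?thesis
    using True
    unfolding zcomm_def zmult_band1[OF assms] zmult_band2[OF assms]
      zmult_band1[OF pX] zmult_band2[OF pX]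
    apply (simp add: zproj_def sum_subtractf[symmetric] sum.distrib[symmetric] if_distrib
        cong: if_cong)
    by (intro sum.cong) auto
next
  case False
  have pX: "band r (zproj X)" using band_proj[OF assms] .
  show ?thesis
    using False
    unfolding zcomm_def zmult_band1[OF pX] zmult_band2[OF pX]
    by (simp add: zproj_def)
qed

lemma alpha_formula:
  assumes "band r X" "int r \<le> N"
  shows "alpha X Y = (\<Sum>i\<in>{-N..N}. \<Sum>j\<in>{-N..N}. (sg i - sg j) * X i j * Y j i)"
proof -
  let ?M = "(\<lambda>i j. zproj (zcomm X Y) i j - zcomm (zproj X) (zproj Y) i j)"
  define g where "g i k = (if k < 0 then X i k * Y k i - Y i k * X k i else 0)" for i k
  have D: "?M i i = (if i \<ge> 0 then (\<Sum>k\<in>{i - int r..i + int r}. g i k) else 0)" for i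
    unfolding g_def by (rule diag[OF assms(1)])
  have "alpha X Y = (\<Sum>i\<in>{-N..N}. ?M i i)"
    unfolding alpha_def ztrace_def
  proof (rule sum_support)
    fix i assume i: "i \<notin> {-N..N}"
    show "?M i i = 0"
    proof (cases "i \<ge> 0")
      case True
      then have "i > N" using i by auto
      then have "\<forall>k\<in>{i - int r..i + int r}. g i k = 0" using assms(2) by (auto simp: g_def)
      then show ?thesis unfolding D by simp
    qed (simp add: D)
  qed simp
  also have "\<dots> = (\<Sum>i\<in>{-N..N}. \<Sum>j\<in>{-N..N}. (if i \<ge> 0 then g i j else 0))"
  proof (rule sum.cong[OF refl])
    fix i assume i: "i \<in> {-N..N}"
    show "?M i i = (\<Sum>j\<in>{-N..N}. (if i \<ge> 0 then g i j else 0))"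
    proof (cases "i \<ge> 0")
      case True
      have "(\<Sum>k\<in>{i - int r..i + int r}. g i k) = (\<Sum>j\<in>{-N..N}. g i j)"
      proof (rule sum_common)
        fix k assume k: "k \<notin> {i - int r..i + int r} \<inter> {-N..N}"
        show "g i k = 0"
        proof (cases "k \<in> {i - int r..i + int r}")
          case True
          then show ?thesis using k \<open>i \<ge> 0\<close> assms(2) by (auto simp: g_def)
        next
          case False
          then have "\<bar>i - k\<bar> > int r" "\<bar>k - i\<bar> > int r" by auto
          then show ?thesis using assms(1) by (auto simp: g_def band_def)
        qed
      qed auto
      then show ?thesis using True by (simp add: D)
    qed (simp add: D)
  qed
  also have "\<dots> = (\<Sum>i\<in>{-N..N}. \<Sum>j\<in>{-N..N}. (sg i - sg j) * X i j * Y j i)"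
  proof -
    define p where "p i j = (if i \<ge> 0 \<and> j < 0 then X i j * Y j i else 0)" for i j
    define q where "q i j = (if i < 0 \<and> j \<ge> 0 then X i j * Y j i else 0)" for i j
    have e1: "(if i \<ge> 0 then g i j else 0) = p i j - q j i" for i j
      by (auto simp: p_def q_def g_def)
    have e2: "(sg i - sg j) * X i j * Y j i = p i j - q i j" for i j
      by (auto simp: p_def q_def sg_def)
    have sw: "(\<Sum>i\<in>{-N..N}. \<Sum>j\<in>{-N..N}. q j i) = (\<Sum>i\<in>{-N..N}. \<Sum>j\<in>{-N..N}. q i j)"
      by (rule sum.swap)
    show ?thesis unfolding e1 e2 sum_subtractf sw ..
  qed
  finally show ?thesis .
qed


lemma tri:
  assumes "band ra A" "band rb B" "band rc C" "ra + rb + rc \<le> R"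
  shows "alpha (zmult A B) C = (\<Sum>i\<in>{-(2*int R)..2*int R}. \<Sum>j\<in>{-(2*int R)..2*int R}.
     \<Sum>k\<in>{-(2*int R)..2*int R}. (sg i - sg j) * A i k * B k j * C j i)"
proof -
  let ?K = "{-(2*int R)..2*int R}"
  have "alpha (zmult A B) C = (\<Sum>i\<in>?K. \<Sum>j\<in>?K. (sg i - sg j) * zmult A B i j * C j i)"
    by (rule alpha_formula[OF band_mult[OF assms(1,2)]]) (use assms(4) in auto)
  also have "\<dots> = (\<Sum>i\<in>?K. \<Sum>j\<in>?K. \<Sum>k\<in>?K. (sg i - sg j) * A i k * B k j * C j i)"
  proof (intro sum.cong refl)
    fix i j assume i: "i \<in> ?K" and j: "j \<in> ?K"
    show "(sg i - sg j) * zmult A B i j * C j i = (\<Sum>k\<in>?K. (sg i - sg j) * A i k * B k j * C j i)"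
    proof (cases "sg i = sg j \<or> \<bar>j - i\<bar> > int rc")
      case True
      then show ?thesis using assms(3) by (auto simp: band_def)
    next
      case False
      then have "\<bar>i\<bar> \<le> int rc" by (auto simp: sg_def split: if_splits)
      have "zmult A B i j = (\<Sum>k\<in>{i - int ra..i + int ra}. A i k * B k j)"
        by (rule zmult_band1[OF assms(1)])
      also have "\<dots> = (\<Sum>k\<in>?K. A i k * B k j)"
      proof (rule sum_common)
        fix k assume k: "k \<notin> {i - int ra..i + int ra} \<inter> ?K"
        then have "k \<notin> {i - int ra..i + int ra}"
          using \<open>\<bar>i\<bar> \<le> int rc\<close> assms(4) by auto
        then have "\<bar>i - k\<bar> > int ra" by auto
        then show "A i k * B k j = 0" using assms(1) by (auto simp: band_def)
      qed auto
      finally show ?thesis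
        by (simp add: sum_distrib_left sum_distrib_right mult.assoc)
    qed
  qed
  finally show ?thesis .
qed

theorem mainTheorem17:
  assumes "A \<in> gl_bar" and "B \<in> gl_bar" and "C \<in> gl_bar"
  shows "alpha (zmult A B) C + alpha (zmult B C) A + alpha (zmult C A) B = 0"
proof -
  obtain ra where a: "band ra A" using band_of_gl[OF assms(1)] by blast
  obtain rb where b: "band rb B" using band_of_gl[OF assms(2)] by blast
  obtain rc where c: "band rc C" using band_of_gl[OF assms(3)] by blast
  define R where "R = ra + rb + rc"
  define K where "K = {-(2*int R)..2*int R}"
  define F where "F a b c = A a b * B b c * C c a" for a b c
  have T1: "alpha (zmult A B) C = (\<Sum>a\<in>K. \<Sum>b\<in>K. \<Sum>c\<in>K. (sg a - sg c) * F a b c)"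
  proof -
    have "alpha (zmult A B) C = (\<Sum>a\<in>K. \<Sum>c\<in>K. \<Sum>b\<in>K. (sg a - sg c) * F a b c)"
      unfolding K_def F_def by (subst tri[OF a b c]) (auto simp: R_def mult.assoc)
    also have "\<dots> = (\<Sum>a\<in>K. \<Sum>b\<in>K. \<Sum>c\<in>K. (sg a - sg c) * F a b c)"
      by (rule sum.cong[OF refl], rule sum.swap)
    finally show ?thesis .
  qed
  have T2: "alpha (zmult B C) A = (\<Sum>a\<in>K. \<Sum>b\<in>K. \<Sum>c\<in>K. (sg b - sg a) * F a b c)"
  proof -
    have "alpha (zmult B C) A = (\<Sum>b\<in>K. \<Sum>a\<in>K. \<Sum>c\<in>K. (sg b - sg a) * F a b c)"
      unfolding K_def F_def by (subst tri[OF b c a]) (auto simp: R_def ac_simps)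
    also have "\<dots> = (\<Sum>a\<in>K. \<Sum>b\<in>K. \<Sum>c\<in>K. (sg b - sg a) * F a b c)"
      by (rule sum.swap)
    finally show ?thesis .
  qed
  have T3: "alpha (zmult C A) B = (\<Sum>a\<in>K. \<Sum>b\<in>K. \<Sum>c\<in>K. (sg c - sg b) * F a b c)"
  proof -
    have "alpha (zmult C A) B = (\<Sum>c\<in>K. \<Sum>b\<in>K. \<Sum>a\<in>K. (sg c - sg b) * F a b c)"
      unfolding K_def F_def by (subst tri[OF c a b]) (auto simp: R_def ac_simps)
    also have "\<dots> = (\<Sum>c\<in>K. \<Sum>a\<in>K. \<Sum>b\<in>K. (sg c - sg b) * F a b c)"
      by (rule sum.cong[OF refl], rule sum.swap)
    also have "\<dots> = (\<Sum>a\<in>K. \<Sum>c\<in>K. \<Sum>b\<in>K. (sg c - sg b) * F a b c)"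
      by (rule sum.swap)
    also have "\<dots> = (\<Sum>a\<in>K. \<Sum>b\<in>K. \<Sum>c\<in>K. (sg c - sg b) * F a b c)"
      by (rule sum.cong[OF refl], rule sum.swap)
    finally show ?thesis .
  qed
  show ?thesis
    unfolding T1 T2 T3 sum.distrib[symmetric]
    by (simp add: algebra_simps)
qed

end
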